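(* For any metric space $(X,d)$, any $x_0\in X$ and $n\geq 1$, the function $\rho:\pi_n(X,x_0)\times\pi_n(X,x_0)\to[0,\infty)$ is a pseudometric on $\pi_n(X,x_0)$.
   Context: $\Omega^n(X,x_0)$ is the set of continuous maps $\alpha:[0,1]^n\to X$ with $\alpha(\partial[0,1]^n)=\{x_0\}$, with uniform metric $\mu(\alpha,\beta)=\sup_{t\in[0,1]^n}d(\alpha(t),\beta(t))$. For $a,b\in\pi_n(X,x_0)$, $\rho(a,b)=\inf\{\mu(\alpha,\beta)\mid\alpha\in a,\beta\in b\}$. *)

theory Defs
  imports "HOL-Analysis.Analysis"
begin

text \<open>The unit cube [0,1]^n, realised inside nat => real (product topology),
  with coordinates i >= n fixed to 0.\<close>
definition unit_cube :: "nat \<Rightarrow> (nat \<Rightarrow> real) set" where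
  "unit_cube n = {t. (\<forall>i<n. 0 \<le> t i \<and> t i \<le> 1) \<and> (\<forall>i\<ge>n. t i = 0)}"

definition cube_boundary :: "nat \<Rightarrow> (nat \<Rightarrow> real) set" where
  "cube_boundary n = {t \<in> unit_cube n. \<exists>i<n. t i = 0 \<or> t i = 1}"

definition cube_top :: "nat \<Rightarrow> (nat \<Rightarrow> real) topology" where
  "cube_top n = subtopology euclidean (unit_cube n)"

definition Omega :: "nat \<Rightarrow> 'a set \<Rightarrow> ('a \<Rightarrow> 'a \<Rightarrow> real) \<Rightarrow> 'a \<Rightarrow> ((nat \<Rightarrow> real) \<Rightarrow> 'a) set" where
  "Omega n M d x0 = {\<alpha>. continuous_map (cube_top n) (Metric_space.mtopology M d) \<alpha>
                        \<and> (\<forall>t\<in>cube_boundary n. \<alpha> t = x0)}"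

definition rel_homotopic :: "nat \<Rightarrow> 'a set \<Rightarrow> ('a \<Rightarrow> 'a \<Rightarrow> real) \<Rightarrow> 'a \<Rightarrow> ((nat \<Rightarrow> real) \<Rightarrow> 'a) rel" where
  "rel_homotopic n M d x0 = {(\<alpha>, \<beta>). \<alpha> \<in> Omega n M d x0 \<and> \<beta> \<in> Omega n M d x0 \<and>
      homotopic_with (\<lambda>h. \<forall>t\<in>cube_boundary n. h t = x0) (cube_top n) (Metric_space.mtopology M d) \<alpha> \<beta>}"

definition homotopy_group_set :: "nat \<Rightarrow> 'a set \<Rightarrow> ('a \<Rightarrow> 'a \<Rightarrow> real) \<Rightarrow> 'a \<Rightarrow> ((nat \<Rightarrow> real) \<Rightarrow> 'a) set set" where
  "homotopy_group_set n M d x0 = Omega n M d x0 // rel_homotopic n M d x0"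

definition unif_dist :: "nat \<Rightarrow> ('a \<Rightarrow> 'a \<Rightarrow> real) \<Rightarrow> ((nat \<Rightarrow> real) \<Rightarrow> 'a) \<Rightarrow> ((nat \<Rightarrow> real) \<Rightarrow> 'a) \<Rightarrow> real" where
  "unif_dist n d \<alpha> \<beta> = (SUP t\<in>unit_cube n. d (\<alpha> t) (\<beta> t))"

definition rho :: "nat \<Rightarrow> ('a \<Rightarrow> 'a \<Rightarrow> real) \<Rightarrow> ((nat \<Rightarrow> real) \<Rightarrow> 'a) set \<Rightarrow> ((nat \<Rightarrow> real) \<Rightarrow> 'a) set \<Rightarrow> real" where
  "rho n d a b = Inf {unif_dist n d \<alpha> \<beta> | \<alpha> \<beta>. \<alpha> \<in> a \<and> \<beta> \<in> b}"

definition pseudometric_on :: "'b set \<Rightarrow> ('b \<Rightarrow> 'b \<Rightarrow> real) \<Rightarrow> bool" where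
  "pseudometric_on S f \<longleftrightarrow>
     (\<forall>x\<in>S. \<forall>y\<in>S. 0 \<le> f x y) \<and>
     (\<forall>x\<in>S. f x x = 0) \<and>
     (\<forall>x\<in>S. \<forall>y\<in>S. f x y = f y x) \<and>
     (\<forall>x\<in>S. \<forall>y\<in>S. \<forall>z\<in>S. f x z \<le> f x y + f y z)"

end

theory Submission
  imports Defs
begin


lemma cube_upd: "t \<in> unit_cube n \<Longrightarrow> 0 < n \<Longrightarrow> 0 \<le> s \<Longrightarrow> s \<le> 1 \<Longrightarrow> t(0:=s) \<in> unit_cube n"
  by (auto simp: unit_cube_def)

lemma bd_upd01: "t \<in> unit_cube n \<Longrightarrow> 0 < n \<Longrightarrow> s = 0 \<or> s = 1 \<Longrightarrow> t(0:=s) \<in> cube_boundary n"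
  by (auto simp: unit_cube_def cube_boundary_def)

lemma bd_upd_other:
  assumes "t \<in> unit_cube n" "i < n" "i \<noteq> 0" "t i = 0 \<or> t i = 1" "0 \<le> s" "s \<le> 1"
  shows "t(0:=s) \<in> cube_boundary n"
proof -
  have n: "0 < n" using assms(2) by simp
  have c: "t(0:=s) \<in> unit_cube n" using cube_upd[OF assms(1) n assms(5,6)] .
  have e: "(t(0:=s)) i = t i" using assms(3) by simp
  show ?thesis unfolding cube_boundary_def
    using c e assms(2,4) by (simp only: mem_Collect_eq) (intro conjI exI[of _ i]; simp)
qed

lemma bd_cases:
  assumes "t \<in> cube_boundary n"
  shows "t 0 = 0 \<or> t 0 = 1 \<or> (\<exists>i<n. i \<noteq> 0 \<and> (t i = 0 \<or> t i = 1))"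
proof -
  obtain i where i: "i < n" "t i = 0 \<or> t i = 1" using assms by (auto simp: cube_boundary_def)
  show ?thesis
  proof (cases "i = 0")
    case True
    then have "t 0 = 0 \<or> t 0 = 1" using i(2) by simp
    then show ?thesis by (rule disjE) simp_all
  next
    case False
    then have "\<exists>i<n. i \<noteq> 0 \<and> (t i = 0 \<or> t i = 1)" using i by (intro exI[of _ i]) simp
    then show ?thesis by simp
  qed
qed

lemma bd_sub: "cube_boundary n \<subseteq> unit_cube n"
  by (auto simp: cube_boundary_def)

lemma topspace_cube [simp]: "topspace (cube_top n) = unit_cube n"
  by (simp add: cube_top_def)

lemma zero_cube: "(\<lambda>_. 0) \<in> unit_cube n"
  by (simp add: unit_cube_def)

lemma compact_cube: "compactin (cube_top n) (unit_cube n)"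
proof -
  have eq: "unit_cube n = PiE UNIV (\<lambda>i. if i < n then {0..1::real} else {0})"
  proof (rule set_eqI)
    fix x :: "nat \<Rightarrow> real"
    have "x \<in> unit_cube n \<longleftrightarrow> (\<forall>i. x i \<in> (if i < n then {0..1} else {0}))"
      unfolding unit_cube_def by (simp add: not_less[symmetric]) metis
    then show "x \<in> unit_cube n \<longleftrightarrow> x \<in> PiE UNIV (\<lambda>i. if i < n then {0..1::real} else {0})"
      by (simp add: PiE_iff)
  qed
  have "compactin (product_topology (\<lambda>i. euclideanreal) UNIV) (unit_cube n)"
    unfolding eq by (simp add: compactin_PiE)
  then have "compactin euclidean (unit_cube n)"
    by (simp add: euclidean_product_topology)
  then show ?thesis by (simp add: cube_top_def compactin_subtopology)
qed


lemma R_iff: "(f,g) \<in> rel_homotopic n M d x0 \<longleftrightarrow>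
   homotopic_with (\<lambda>h. \<forall>t\<in>cube_boundary n. h t = x0) (cube_top n) (Metric_space.mtopology M d) f g"
proof
  assume "(f,g) \<in> rel_homotopic n M d x0"
  then show "homotopic_with (\<lambda>h. \<forall>t\<in>cube_boundary n. h t = x0) (cube_top n) (Metric_space.mtopology M d) f g"
    by (simp add: rel_homotopic_def)
next
  assume H: "homotopic_with (\<lambda>h. \<forall>t\<in>cube_boundary n. h t = x0) (cube_top n) (Metric_space.mtopology M d) f g"
  have c: "continuous_map (cube_top n) (Metric_space.mtopology M d) f \<and> continuous_map (cube_top n) (Metric_space.mtopology M d) g"
    by (rule homotopic_with_imp_continuous_maps[OF H])
  have p: "(\<forall>t\<in>cube_boundary n. f t = x0) \<and> (\<forall>t\<in>cube_boundary n. g t = x0)"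
    using homotopic_with_imp_property[OF H] by simp
  show "(f,g) \<in> rel_homotopic n M d x0"
    unfolding rel_homotopic_def Omega_def using c p H by simp
qed

lemma Omega_into: "Metric_space M d \<Longrightarrow> f \<in> Omega n M d x0 \<Longrightarrow> t \<in> unit_cube n \<Longrightarrow> f t \<in> M"
proof -
  assume a: "Metric_space M d" "f \<in> Omega n M d x0" "t \<in> unit_cube n"
  then have "continuous_map (cube_top n) (Metric_space.mtopology M d) f" by (simp add: Omega_def)
  then have "f ` topspace (cube_top n) \<subseteq> topspace (Metric_space.mtopology M d)"
    by (rule continuous_map_image_subset_topspace)
  then show "f t \<in> M" using a by (simp add: Metric_space.topspace_mtopology[OF a(1)] image_subset_iff)
qed


lemma bounded_dist:
  assumes "Metric_space M d" "f \<in> Omega n M d x0" "g \<in> Omega n M d x0"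
  shows "bdd_above ((\<lambda>t. d (f t) (g t)) ` unit_cube n)"
proof -
  interpret Metric_space M d by fact
  have cf: "continuous_map (cube_top n) mtopology f" and cg: "continuous_map (cube_top n) mtopology g"
    using assms by (auto simp: Omega_def)
  have "mbounded (f ` unit_cube n)" "mbounded (g ` unit_cube n)"
    using compactin_imp_mbounded image_compactin[OF compact_cube] cf cg by blast+
  then have "mbounded (f ` unit_cube n \<union> g ` unit_cube n)" by (simp add: mbounded_Un)
  then obtain c B where cB: "f ` unit_cube n \<union> g ` unit_cube n \<subseteq> mcball c B"
    by (auto simp: mbounded_def)
  show ?thesis unfolding bdd_above_def
  proof (intro exI ballI)
    fix y assume "y \<in> (\<lambda>t. d (f t) (g t)) ` unit_cube n"
    then obtain t where t: "t \<in> unit_cube n" "y = d (f t) (g t)" by auto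
    have "f t \<in> mcball c B" "g t \<in> mcball c B" using cB t by auto
    then have m: "f t \<in> M" "g t \<in> M" "c \<in> M" "d c (f t) \<le> B" "d c (g t) \<le> B" by auto
    then have "d (f t) (g t) \<le> d (f t) c + d c (g t)" using triangle by blast
    then have "d (f t) (g t) \<le> B + B" using m commute[of "f t" c] by linarith
    then show "y \<le> 2 * B" using t by simp
  qed
qed

lemma unif_upper:
  assumes "Metric_space M d" "f \<in> Omega n M d x0" "g \<in> Omega n M d x0" "t \<in> unit_cube n"
  shows "d (f t) (g t) \<le> unif_dist n d f g"
  unfolding unif_dist_def by (rule cSUP_upper[OF assms(4) bounded_dist[OF assms(1-3)]])

lemma unif_least:
  assumes "\<And>t. t \<in> unit_cube n \<Longrightarrow> d (f t) (g t) \<le> B"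
  shows "unif_dist n d f g \<le> B"
  unfolding unif_dist_def using zero_cube by (intro cSUP_least assms) auto

lemma unif_nonneg:
  assumes "Metric_space M d" "f \<in> Omega n M d x0" "g \<in> Omega n M d x0"
  shows "0 \<le> unif_dist n d f g"
proof -
  have "0 \<le> d (f (\<lambda>_. 0)) (g (\<lambda>_. 0))"
    using Metric_space.nonneg[OF assms(1)] by blast
  also have "\<dots> \<le> unif_dist n d f g" by (rule unif_upper[OF assms zero_cube])
  finally show ?thesis .
qed

lemma unif_self:
  assumes "Metric_space M d" "f \<in> Omega n M d x0"
  shows "unif_dist n d f f = 0"
proof -
  have "\<And>t. t \<in> unit_cube n \<Longrightarrow> d (f t) (f t) = 0"
    using Omega_into[OF assms] by (simp add: Metric_space.zero[OF assms(1)])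
  then have "(SUP t\<in>unit_cube n. d (f t) (f t)) = (SUP t\<in>unit_cube n. (0::real))"
    by (rule SUP_cong[OF refl])
  also have "\<dots> = 0" using zero_cube by (intro cSUP_const) blast
  finally show ?thesis unfolding unif_dist_def .
qed

lemma unif_sym:
  assumes "Metric_space M d" "f \<in> Omega n M d x0" "g \<in> Omega n M d x0"
  shows "unif_dist n d f g = unif_dist n d g f"
proof -
  have "\<And>t. t \<in> unit_cube n \<Longrightarrow> d (f t) (g t) = d (g t) (f t)"
    by (rule Metric_space.commute[OF assms(1)])
  then show ?thesis unfolding unif_dist_def by (rule SUP_cong[OF refl])
qed

lemma cont_upd:
  assumes "continuous_on S e"
  shows "continuous_on S (\<lambda>p::real \<times> (nat \<Rightarrow> real). (snd p)(0 := e p))"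
proof (rule continuous_on_coordinatewise_then_product)
  fix i :: nat
  show "continuous_on S (\<lambda>p. ((snd p)(0 := e p)) i)"
  proof (cases "i = 0")
    case True then show ?thesis using assms by simp
  next
    case False
    have "continuous_on S (\<lambda>p. snd p i)"
      by (rule continuous_on_compose2[OF continuous_on_product_coordinates continuous_on_snd]) auto
    then show ?thesis using False by simp
  qed
qed

lemma comp_cont:
  assumes "continuous_map (top_of_set D) Y F" "continuous_on S g" "g ` S \<subseteq> D"
  shows "continuous_map (top_of_set S) Y (\<lambda>p. F (g p))"
proof -
  have "continuous_map (top_of_set S) (top_of_set D) g"
    using assms(2,3) by (auto simp: continuous_map_in_subtopology)
  from continuous_map_compose[OF this assms(1)] show ?thesis by (simp add: o_def)
qed

lemma sub_eq: "subtopology (top_of_set D) {x. x \<in> topspace (top_of_set D) \<and> P x} = top_of_set {x\<in>D. P x}"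
proof -
  have "D \<inter> {x. x \<in> D \<and> P x} = {x\<in>D. P x}" by blast
  then show ?thesis by (simp add: subtopology_subtopology)
qed



lemma cont_snd0 [continuous_intros]: "continuous_on S (\<lambda>p::real \<times> (nat \<Rightarrow> real). snd p 0)"
  by (rule continuous_on_compose2[OF continuous_on_product_coordinates continuous_on_snd]) auto

lemma cube01: "t \<in> unit_cube n \<Longrightarrow> 0 < n \<Longrightarrow> 0 \<le> t 0 \<and> t 0 \<le> 1"
  by (simp add: unit_cube_def)

definition join3 :: "((nat\<Rightarrow>real)\<Rightarrow>'a) \<Rightarrow> ((nat\<Rightarrow>real)\<Rightarrow>'a) \<Rightarrow> ((nat\<Rightarrow>real)\<Rightarrow>'a) \<Rightarrow> (nat\<Rightarrow>real) \<Rightarrow> 'a" where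
  "join3 f g h t = (if t 0 \<le> 1/3 then f (t(0:=3 * t 0)) else if t 0 \<le> 2/3 then g (t(0:=3 * t 0 - 1))
      else h (t(0:=3 * t 0 - 2)))"

lemma P_eq: "(\<And>x. x \<in> topspace (cube_top n) \<Longrightarrow> h x = k x) \<Longrightarrow>
   (\<forall>t\<in>cube_boundary n. h t = x0) \<longleftrightarrow> (\<forall>t\<in>cube_boundary n. k t = x0)"
  using bd_sub by (metis subsetD topspace_cube)

lemma J:
  fixes F G K :: "real \<times> (nat \<Rightarrow> real) \<Rightarrow> 'a"
  assumes n: "0 < n"
  and cF: "continuous_map (top_of_set ({0..1} \<times> unit_cube n)) Y F"
  and cG: "continuous_map (top_of_set ({0..1} \<times> unit_cube n)) Y G"
  and cK: "continuous_map (top_of_set ({0..1} \<times> unit_cube n)) Y K"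
  and g1: "\<And>u t. u \<in> {0..1} \<Longrightarrow> t \<in> unit_cube n \<Longrightarrow> F (u, t(0:=1)) = G (u, t(0:=0))"
  and g2: "\<And>u t. u \<in> {0..1} \<Longrightarrow> t \<in> unit_cube n \<Longrightarrow> G (u, t(0:=1)) = K (u, t(0:=0))"
  and PF: "\<And>u t. u \<in> {0..1} \<Longrightarrow> t \<in> unit_cube n \<Longrightarrow> t 0 = 0 \<or> (\<exists>i<n. i \<noteq> 0 \<and> (t i = 0 \<or> t i = 1)) \<Longrightarrow> F (u,t) = x0"
  and PG: "\<And>u t. u \<in> {0..1} \<Longrightarrow> t \<in> unit_cube n \<Longrightarrow> (\<exists>i<n. i \<noteq> 0 \<and> (t i = 0 \<or> t i = 1)) \<Longrightarrow> G (u,t) = x0"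
  and PK: "\<And>u t. u \<in> {0..1} \<Longrightarrow> t \<in> unit_cube n \<Longrightarrow> t 0 = 1 \<or> (\<exists>i<n. i \<noteq> 0 \<and> (t i = 0 \<or> t i = 1)) \<Longrightarrow> K (u,t) = x0"
  and f0: "\<And>t. t \<in> unit_cube n \<Longrightarrow> f0 t = join3 (\<lambda>x. F (0,x)) (\<lambda>x. G (0,x)) (\<lambda>x. K (0,x)) t"
  and f1: "\<And>t. t \<in> unit_cube n \<Longrightarrow> f1 t = join3 (\<lambda>x. F (1,x)) (\<lambda>x. G (1,x)) (\<lambda>x. K (1,x)) t"
  shows "homotopic_with (\<lambda>h. \<forall>t\<in>cube_boundary n. h t = x0) (cube_top n) Y f0 f1"
proof -
  define D where "D = {0..1::real} \<times> unit_cube n"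
  define h where "h = (\<lambda>p::real \<times> (nat\<Rightarrow>real). join3 (\<lambda>x. F (fst p, x)) (\<lambda>x. G (fst p, x)) (\<lambda>x. K (fst p, x)) (snd p))"
  define S2 where "S2 = {x\<in>D. 1/3 \<le> snd x 0}"
  have c1: "continuous_map (top_of_set {x\<in>D. snd x 0 \<le> 1/3}) Y (\<lambda>p. F (fst p, (snd p)(0 := 3 * snd p 0)))"
  proof (rule comp_cont[OF cF[folded D_def]])
    show "continuous_on {x\<in>D. snd x 0 \<le> 1/3} (\<lambda>p. (fst p, (snd p)(0 := 3 * snd p 0)))"
      by (intro continuous_on_Pair continuous_on_fst cont_upd continuous_intros)
    show "(\<lambda>p. (fst p, (snd p)(0 := 3 * snd p 0))) ` {x\<in>D. snd x 0 \<le> 1/3} \<subseteq> D"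
    proof
      fix y assume "y \<in> (\<lambda>p. (fst p, (snd p)(0 := 3 * snd p 0))) ` {x\<in>D. snd x 0 \<le> 1/3}"
      then obtain u t where ut: "y = (u, t(0 := 3 * t 0))" "u \<in> {0..1}" "t \<in> unit_cube n" "t 0 \<le> 1/3"
        by (auto simp: D_def)
      then show "y \<in> D" using cube01[OF ut(3) n] cube_upd[OF ut(3) n, of "3 * t 0"] by (simp add: D_def)
    qed
  qed
  have c2: "continuous_map (top_of_set {x\<in>S2. snd x 0 \<le> 2/3}) Y (\<lambda>p. G (fst p, (snd p)(0 := 3 * snd p 0 - 1)))"
  proof (rule comp_cont[OF cG[folded D_def]])
    show "continuous_on {x\<in>S2. snd x 0 \<le> 2/3} (\<lambda>p. (fst p, (snd p)(0 := 3 * snd p 0 - 1)))"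
      by (intro continuous_on_Pair continuous_on_fst cont_upd continuous_intros)
    show "(\<lambda>p. (fst p, (snd p)(0 := 3 * snd p 0 - 1))) ` {x\<in>S2. snd x 0 \<le> 2/3} \<subseteq> D"
    proof
      fix y assume "y \<in> (\<lambda>p. (fst p, (snd p)(0 := 3 * snd p 0 - 1))) ` {x\<in>S2. snd x 0 \<le> 2/3}"
      then obtain u t where ut: "y = (u, t(0 := 3 * t 0 - 1))" "u \<in> {0..1}" "t \<in> unit_cube n" "1/3 \<le> t 0" "t 0 \<le> 2/3"
        by (auto simp: D_def S2_def)
      then show "y \<in> D" using cube_upd[OF ut(3) n, of "3 * t 0 - 1"] by (simp add: D_def)
    qed
  qed
  have c3: "continuous_map (top_of_set {x\<in>S2. 2/3 \<le> snd x 0}) Y (\<lambda>p. K (fst p, (snd p)(0 := 3 * snd p 0 - 2)))"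
  proof (rule comp_cont[OF cK[folded D_def]])
    show "continuous_on {x\<in>S2. 2/3 \<le> snd x 0} (\<lambda>p. (fst p, (snd p)(0 := 3 * snd p 0 - 2)))"
      by (intro continuous_on_Pair continuous_on_fst cont_upd continuous_intros)
    show "(\<lambda>p. (fst p, (snd p)(0 := 3 * snd p 0 - 2))) ` {x\<in>S2. 2/3 \<le> snd x 0} \<subseteq> D"
    proof
      fix y assume "y \<in> (\<lambda>p. (fst p, (snd p)(0 := 3 * snd p 0 - 2))) ` {x\<in>S2. 2/3 \<le> snd x 0}"
      then obtain u t where ut: "y = (u, t(0 := 3 * t 0 - 2))" "u \<in> {0..1}" "t \<in> unit_cube n" "2/3 \<le> t 0"
        by (auto simp: D_def S2_def)
      then show "y \<in> D" using cube01[OF ut(3) n] cube_upd[OF ut(3) n, of "3 * t 0 - 2"] by (simp add: D_def)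
    qed
  qed
  have c23: "continuous_map (top_of_set S2) Y
     (\<lambda>p. if snd p 0 \<le> 2/3 then G (fst p, (snd p)(0 := 3 * snd p 0 - 1)) else K (fst p, (snd p)(0 := 3 * snd p 0 - 2)))"
  proof (rule continuous_map_cases_le)
    show "continuous_map (top_of_set S2) euclideanreal (\<lambda>p. snd p 0)"
      by (simp add: cont_snd0)
    show "continuous_map (top_of_set S2) euclideanreal (\<lambda>p. 2/3)" by simp
    show "continuous_map (subtopology (top_of_set S2) {x \<in> topspace (top_of_set S2). snd x 0 \<le> 2/3}) Y
        (\<lambda>p. G (fst p, (snd p)(0 := 3 * snd p 0 - 1)))"
      unfolding sub_eq by (rule c2)
    show "continuous_map (subtopology (top_of_set S2) {x \<in> topspace (top_of_set S2). 2/3 \<le> snd x 0}) Y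
        (\<lambda>p. K (fst p, (snd p)(0 := 3 * snd p 0 - 2)))"
      unfolding sub_eq by (rule c3)
    fix x assume "x \<in> topspace (top_of_set S2)" "snd x 0 = 2/3"
    then have x: "fst x \<in> {0..1}" "snd x \<in> unit_cube n" "snd x 0 = 2/3" by (auto simp: S2_def D_def)
    then have e: "3 * snd x 0 - 1 = 1" "3 * snd x 0 - 2 = 0" by simp_all
    show "G (fst x, (snd x)(0 := 3 * snd x 0 - 1)) = K (fst x, (snd x)(0 := 3 * snd x 0 - 2))"
      unfolding e by (rule g2[OF x(1,2)])
  qed
  have hc: "continuous_map (top_of_set D) Y h"
  proof -
    have "continuous_map (top_of_set D) Y
     (\<lambda>p. if snd p 0 \<le> 1/3 then F (fst p, (snd p)(0 := 3 * snd p 0)) else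
          (if snd p 0 \<le> 2/3 then G (fst p, (snd p)(0 := 3 * snd p 0 - 1)) else K (fst p, (snd p)(0 := 3 * snd p 0 - 2))))"
    proof (rule continuous_map_cases_le)
      show "continuous_map (top_of_set D) euclideanreal (\<lambda>p. snd p 0)"
        by (simp add: cont_snd0)
      show "continuous_map (top_of_set D) euclideanreal (\<lambda>p. 1/3)" by simp
      show "continuous_map (subtopology (top_of_set D) {x \<in> topspace (top_of_set D). snd x 0 \<le> 1/3}) Y
          (\<lambda>p. F (fst p, (snd p)(0 := 3 * snd p 0)))"
        unfolding sub_eq by (rule c1)
      show "continuous_map (subtopology (top_of_set D) {x \<in> topspace (top_of_set D). 1/3 \<le> snd x 0}) Y
          (\<lambda>p. if snd p 0 \<le> 2/3 then G (fst p, (snd p)(0 := 3 * snd p 0 - 1)) else K (fst p, (snd p)(0 := 3 * snd p 0 - 2)))"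
        unfolding sub_eq using c23 by (simp add: S2_def)
      fix x assume "x \<in> topspace (top_of_set D)" "snd x 0 = 1/3"
      then have x: "fst x \<in> {0..1}" "snd x \<in> unit_cube n" "snd x 0 = 1/3" by (auto simp: D_def)
      then have e: "3 * snd x 0 = 1" "3 * snd x 0 - 1 = 0" "(snd x 0 \<le> 2/3) = True" by simp_all
      show "F (fst x, (snd x)(0 := 3 * snd x 0)) = (if snd x 0 \<le> 2/3 then G (fst x, (snd x)(0 := 3 * snd x 0 - 1)) else K (fst x, (snd x)(0 := 3 * snd x 0 - 2)))"
        unfolding e if_True using g1[OF x(1,2)] by simp
    qed
    moreover have "h = (\<lambda>p. if snd p 0 \<le> 1/3 then F (fst p, (snd p)(0 := 3 * snd p 0)) else
          (if snd p 0 \<le> 2/3 then G (fst p, (snd p)(0 := 3 * snd p 0 - 1)) else K (fst p, (snd p)(0 := 3 * snd p 0 - 2))))"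
      by (simp add: h_def join3_def)
    ultimately show ?thesis by simp
  qed
  have hP: "\<forall>t\<in>cube_boundary n. h (u, t) = x0" if u: "u \<in> {0..1}" for u
  proof
    fix t assume tb: "t \<in> cube_boundary n"
    then have tc: "t \<in> unit_cube n" using bd_sub by blast
    have t01: "0 \<le> t 0" "t 0 \<le> 1" using cube01[OF tc n] by auto
    have hu: "h (u,t) = join3 (\<lambda>x. F (u, x)) (\<lambda>x. G (u, x)) (\<lambda>x. K (u, x)) t" by (simp add: h_def)
    consider "t 0 = 0" | "t 0 = 1" | "\<exists>i<n. i \<noteq> 0 \<and> (t i = 0 \<or> t i = 1)" using bd_cases[OF tb] by blast
    then show "h (u, t) = x0"
    proof cases
      case 1
      then have "h (u,t) = F (u, t(0:=0))" by (simp add: hu join3_def)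
      also have "\<dots> = x0" using PF[OF u cube_upd[OF tc n, of 0]] by simp
      finally show ?thesis .
    next
      case 2
      then have "h (u,t) = K (u, t(0:=1))" by (simp add: hu join3_def)
      also have "\<dots> = x0" using PK[OF u cube_upd[OF tc n, of 1]] by simp
      finally show ?thesis .
    next
      case 3
      then obtain i where i: "i < n" "i \<noteq> 0" "t i = 0 \<or> t i = 1" by blast
      have ex: "\<And>s. \<exists>i<n. i \<noteq> 0 \<and> ((t(0:=s)) i = 0 \<or> (t(0:=s)) i = 1)"
        using i by (intro exI[of _ i]) simp
      show ?thesis
      proof (cases "t 0 \<le> 1/3")
        case True
        then have "h (u,t) = F (u, t(0:=3 * t 0))" by (simp add: hu join3_def)
        also have "\<dots> = x0" using PF[OF u cube_upd[OF tc n, of "3 * t 0"]] ex True t01 by simp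
        finally show ?thesis .
      next
        case False
        show ?thesis
        proof (cases "t 0 \<le> 2/3")
          case True
          then have "h (u,t) = G (u, t(0:=3 * t 0 - 1))" using False by (simp add: hu join3_def)
          also have "\<dots> = x0" using PG[OF u cube_upd[OF tc n, of "3 * t 0 - 1"]] ex True False by simp
          finally show ?thesis .
        next
          case False2: False
          then have "h (u,t) = K (u, t(0:=3 * t 0 - 2))" using False by (simp add: hu join3_def)
          also have "\<dots> = x0" using PK[OF u cube_upd[OF tc n, of "3 * t 0 - 2"]] ex False2 t01 by simp
          finally show ?thesis .
        qed
      qed
    qed
  qed
  have "homotopic_with (\<lambda>h. \<forall>t\<in>cube_boundary n. h t = x0) (cube_top n) Y (\<lambda>x. h (0,x)) (\<lambda>x. h (1,x))"
    unfolding homotopic_with_def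
  proof (intro exI[of _ h] conjI allI)
    show "continuous_map (prod_topology (top_of_set {0..1}) (cube_top n)) Y h"
      using hc by (simp add: cube_top_def D_def)
  qed (use hP in auto)
  then show ?thesis
  proof (rule homotopic_with_eq)
    fix x assume "x \<in> topspace (cube_top n)"
    then show "f0 x = h (0, x)" "f1 x = h (1, x)" using f0 f1 by (auto simp: h_def)
  next
    fix h k :: "(nat \<Rightarrow> real) \<Rightarrow> 'a"
    assume "\<And>x. x \<in> topspace (cube_top n) \<Longrightarrow> h x = k x"
    then show "(\<forall>t\<in>cube_boundary n. h t = x0) \<longleftrightarrow> (\<forall>t\<in>cube_boundary n. k t = x0)" by (rule P_eq)
  qed
qed



lemma convex01: "0 \<le> u \<Longrightarrow> u \<le> 1 \<Longrightarrow> 0 \<le> a \<Longrightarrow> a \<le> 1 \<Longrightarrow> 0 \<le> b \<Longrightarrow> b \<le> 1 \<Longrightarrow>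
   0 \<le> (1 - u) * a + u * b \<and> (1 - u) * a + u * b \<le> (1::real)"
proof -
  assume a: "0 \<le> u" "u \<le> 1" "0 \<le> a" "a \<le> 1" "0 \<le> b" "b \<le> 1"
  have "(1 - u) * a \<le> (1 - u) * 1" using a by (intro mult_left_mono) auto
  moreover have "u * b \<le> u * 1" using a by (intro mult_left_mono) auto
  moreover have "0 \<le> (1 - u) * a" "0 \<le> u * b" using a by auto
  ultimately show ?thesis by simp
qed

lemma L1:
  fixes \<phi> \<psi> :: "real \<Rightarrow> real"
  assumes n: "0 < n" and cf: "continuous_map (cube_top n) Y f" and Pf: "\<forall>t\<in>cube_boundary n. f t = x0"
  and cphi: "continuous_on {0..1} \<phi>" and cpsi: "continuous_on {0..1} \<psi>"
  and rphi: "\<And>s. s \<in> {0..1} \<Longrightarrow> \<phi> s \<in> {0..1}" and rpsi: "\<And>s. s \<in> {0..1} \<Longrightarrow> \<psi> s \<in> {0..1}"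
  and e0: "\<phi> 0 = \<psi> 0" "\<phi> 0 = 0 \<or> \<phi> 0 = 1" and e1: "\<phi> 1 = \<psi> 1" "\<phi> 1 = 0 \<or> \<phi> 1 = 1"
  and f0: "\<And>t. t \<in> unit_cube n \<Longrightarrow> f0 t = f (t(0 := \<phi> (t 0)))"
  and f1: "\<And>t. t \<in> unit_cube n \<Longrightarrow> f1 t = f (t(0 := \<psi> (t 0)))"
  shows "homotopic_with (\<lambda>h. \<forall>t\<in>cube_boundary n. h t = x0) (cube_top n) Y f0 f1"
proof -
  define D where "D = {0..1::real} \<times> unit_cube n"
  define e where "e = (\<lambda>p::real \<times> (nat\<Rightarrow>real). (1 - fst p) * \<phi> (snd p 0) + fst p * \<psi> (snd p 0))"
  define h where "h = (\<lambda>p::real \<times> (nat\<Rightarrow>real). f ((snd p)(0 := e p)))"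
  have e01: "0 \<le> e (u,t) \<and> e (u,t) \<le> 1" if "u \<in> {0..1}" "t \<in> unit_cube n" for u t
  proof -
    have "t 0 \<in> {0..1}" using cube01[OF that(2) n] by simp
    then have "\<phi> (t 0) \<in> {0..1}" "\<psi> (t 0) \<in> {0..1}" using rphi rpsi by auto
    then show ?thesis using that(1) convex01[of u "\<phi> (t 0)" "\<psi> (t 0)"] by (simp add: e_def)
  qed
  have img: "(\<lambda>p. snd p 0) ` D \<subseteq> {0..1}"
    using cube01[OF _ n] by (auto simp: D_def)
  have ce: "continuous_on D e"
  proof -
    have "continuous_on D (\<lambda>p. \<phi> (snd p 0))"
      by (rule continuous_on_compose2[OF cphi cont_snd0 img])
    moreover have "continuous_on D (\<lambda>p. \<psi> (snd p 0))"
      by (rule continuous_on_compose2[OF cpsi cont_snd0 img])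
    ultimately show ?thesis unfolding e_def by (intro continuous_intros)
  qed
  have hc: "continuous_map (top_of_set D) Y h"
    unfolding h_def
  proof (rule comp_cont[OF cf[unfolded cube_top_def]])
    show "continuous_on D (\<lambda>p. (snd p)(0 := e p))" by (rule cont_upd[OF ce])
    show "(\<lambda>p. (snd p)(0 := e p)) ` D \<subseteq> unit_cube n"
    proof
      fix y assume "y \<in> (\<lambda>p. (snd p)(0 := e p)) ` D"
      then obtain u t where ut: "y = t(0 := e (u,t))" "u \<in> {0..1}" "t \<in> unit_cube n"
        by (auto simp: D_def)
      then show "y \<in> unit_cube n" using e01[OF ut(2,3)] cube_upd[OF ut(3) n] by simp
    qed
  qed
  have hP: "\<forall>t\<in>cube_boundary n. h (u, t) = x0" if u: "u \<in> {0..1}" for u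
  proof
    fix t assume tb: "t \<in> cube_boundary n"
    then have tc: "t \<in> unit_cube n" using bd_sub by blast
    consider "t 0 = 0" | "t 0 = 1" | "\<exists>i<n. i \<noteq> 0 \<and> (t i = 0 \<or> t i = 1)" using bd_cases[OF tb] by blast
    then show "h (u, t) = x0"
    proof cases
      case 1
      have "e (u,t) = \<phi> 0" using 1 e0(1) by (simp add: e_def algebra_simps)
      then have "(t(0 := e (u,t))) \<in> cube_boundary n" using bd_upd01[OF tc n] e0(2) by simp
      then show ?thesis using Pf by (simp add: h_def)
    next
      case 2
      have "e (u,t) = \<phi> 1" using 2 e1(1) by (simp add: e_def algebra_simps)
      then have "(t(0 := e (u,t))) \<in> cube_boundary n" using bd_upd01[OF tc n] e1(2) by simp
      then show ?thesis using Pf by (simp add: h_def)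
    next
      case 3
      then obtain i where i: "i < n" "i \<noteq> 0" "t i = 0 \<or> t i = 1" by blast
      have "(t(0 := e (u,t))) \<in> cube_boundary n"
        using bd_upd_other[OF tc i] e01[OF u tc] by simp
      then show ?thesis using Pf by (simp add: h_def)
    qed
  qed
  have "homotopic_with (\<lambda>h. \<forall>t\<in>cube_boundary n. h t = x0) (cube_top n) Y (\<lambda>x. h (0,x)) (\<lambda>x. h (1,x))"
    unfolding homotopic_with_def
  proof (intro exI[of _ h] conjI allI)
    show "continuous_map (prod_topology (top_of_set {0..1}) (cube_top n)) Y h"
      using hc by (simp add: cube_top_def D_def)
  qed (use hP in auto)
  then show ?thesis
  proof (rule homotopic_with_eq)
    fix x assume "x \<in> topspace (cube_top n)"
    then show "f0 x = h (0, x)" "f1 x = h (1, x)" using f0 f1 by (auto simp: h_def e_def)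
  next
    fix h k :: "(nat \<Rightarrow> real) \<Rightarrow> 'a"
    assume "\<And>x. x \<in> topspace (cube_top n) \<Longrightarrow> h x = k x"
    then show "(\<forall>t\<in>cube_boundary n. h t = x0) \<longleftrightarrow> (\<forall>t\<in>cube_boundary n. k t = x0)" by (rule P_eq)
  qed
qed



lemma lift_upd:
  assumes "continuous_map (cube_top n) Y f" "0 < n" "continuous_on ({0..1::real}\<times>unit_cube n) e"
    "\<And>u t. u \<in> {0..1::real} \<Longrightarrow> t \<in> unit_cube n \<Longrightarrow> 0 \<le> e (u,t) \<and> e (u,t) \<le> 1"
  shows "continuous_map (top_of_set ({0..1::real}\<times>unit_cube n)) Y (\<lambda>p. f ((snd p)(0 := e p)))"
proof (rule comp_cont[OF assms(1)[unfolded cube_top_def]])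
  show "continuous_on ({0..1::real}\<times>unit_cube n) (\<lambda>p. (snd p)(0 := e p))" by (rule cont_upd[OF assms(3)])
  show "(\<lambda>p. (snd p)(0 := e p)) ` ({0..1::real}\<times>unit_cube n) \<subseteq> unit_cube n"
    using assms(4) cube_upd[OF _ assms(2)] by fastforce
qed

lemma lift_snd:
  assumes "continuous_map (cube_top n) Y f"
  shows "continuous_map (top_of_set ({0..1}\<times>unit_cube n)) Y (\<lambda>p. f (snd p))"
  by (rule comp_cont[OF assms(1)[unfolded cube_top_def]]) (auto intro: continuous_on_snd)

lemma bd_intro: "t \<in> unit_cube n \<Longrightarrow> 0 < n \<Longrightarrow> t 0 = 0 \<or> t 0 = 1 \<or> (\<exists>i<n. i \<noteq> 0 \<and> (t i = 0 \<or> t i = 1))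
  \<Longrightarrow> t \<in> cube_boundary n"
  unfolding cube_boundary_def by auto

lemma chainA:
  assumes ms: "Metric_space M d" and n: "0 < n"
    and a: "\<alpha> \<in> Omega n M d x0" and b: "\<beta> \<in> Omega n M d x0" and b': "\<beta>' \<in> Omega n M d x0"
    and H: "homotopic_with (\<lambda>h. \<forall>t\<in>cube_boundary n. h t = x0) (cube_top n) (Metric_space.mtopology M d) \<beta>' \<beta>"
  shows "homotopic_with (\<lambda>h. \<forall>t\<in>cube_boundary n. h t = x0) (cube_top n) (Metric_space.mtopology M d)
           (join3 \<alpha> (\<lambda>t. \<beta> (t(0 := 1 - t 0))) \<beta>') \<alpha>"
proof -
  let ?Y = "Metric_space.mtopology M d"
  let ?P = "\<lambda>h. \<forall>t\<in>cube_boundary n. h t = x0"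
  have ca: "continuous_map (cube_top n) ?Y \<alpha>" and Pa: "\<forall>t\<in>cube_boundary n. \<alpha> t = x0"
    using a by (auto simp: Omega_def)
  have cb: "continuous_map (cube_top n) ?Y \<beta>" and Pb: "\<forall>t\<in>cube_boundary n. \<beta> t = x0"
    using b by (auto simp: Omega_def)
  obtain Hm :: "real \<times> (nat \<Rightarrow> real) \<Rightarrow> 'a" where Hc: "continuous_map (prod_topology (top_of_set {0..1}) (cube_top n)) ?Y Hm"
    and H0: "\<And>x. Hm (0, x) = \<beta>' x" and H1: "\<And>x. Hm (1, x) = \<beta> x"
    and HP: "\<And>u. u \<in> {0..1} \<Longrightarrow> \<forall>t\<in>cube_boundary n. Hm (u, t) = x0"
    using H unfolding homotopic_with_def by blast
  have Hc': "continuous_map (top_of_set ({0..1::real}\<times>unit_cube n)) ?Y Hm"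
    using Hc by (simp add: cube_top_def)
  have cube_bd: "\<And>t. t \<in> unit_cube n \<Longrightarrow> t 0 = 0 \<or> t 0 = 1 \<or> (\<exists>i<n. i \<noteq> 0 \<and> (t i = 0 \<or> t i = 1)) \<Longrightarrow> t \<in> cube_boundary n"
    using bd_intro n by blast
  have step1: "homotopic_with ?P (cube_top n) ?Y (join3 \<alpha> (\<lambda>t. \<beta> (t(0 := 1 - t 0))) \<beta>')
          (join3 \<alpha> (\<lambda>t. \<beta> (t(0 := 1 - t 0))) \<beta>)"
  proof (rule J[where F = "\<lambda>p. \<alpha> (snd p)" and G = "\<lambda>p. \<beta> ((snd p)(0 := 1 - snd p 0))" and K = Hm, OF n])
    show "continuous_map (top_of_set ({0..1::real}\<times>unit_cube n)) ?Y (\<lambda>p. \<alpha> (snd p))" by (rule lift_snd[OF ca])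
    show "continuous_map (top_of_set ({0..1::real}\<times>unit_cube n)) ?Y (\<lambda>p. \<beta> ((snd p)(0 := 1 - snd p 0)))"
      by (rule lift_upd[OF cb n]) (auto intro!: continuous_intros dest: cube01[OF _ n])
    show "continuous_map (top_of_set ({0..1::real}\<times>unit_cube n)) ?Y Hm" by (rule Hc')
  next
    fix u t assume u: "u \<in> {0..1::real}" and t: "t \<in> unit_cube n"
    show "\<alpha> (snd (u, t(0 := 1))) = \<beta> ((snd (u, t(0 := 0)))(0 := 1 - snd (u, t(0 := 0)) 0))"
      using Pa Pb bd_upd01[OF t n] by simp
    show "\<beta> ((snd (u, t(0 := 1)))(0 := 1 - snd (u, t(0 := 1)) 0)) = Hm (u, t(0 := 0))"
      using Pb HP[OF u] bd_upd01[OF t n] by simp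
    show "t 0 = 0 \<or> (\<exists>i<n. i \<noteq> 0 \<and> (t i = 0 \<or> t i = 1)) \<Longrightarrow> \<alpha> (snd (u, t)) = x0"
      using Pa cube_bd[OF t] by auto
    show "(\<exists>i<n. i \<noteq> 0 \<and> (t i = 0 \<or> t i = 1)) \<Longrightarrow> \<beta> ((snd (u, t))(0 := 1 - snd (u, t) 0)) = x0"
      using Pb bd_upd_other[OF t] cube01[OF t n] by auto
    show "t 0 = 1 \<or> (\<exists>i<n. i \<noteq> 0 \<and> (t i = 0 \<or> t i = 1)) \<Longrightarrow> Hm (u, t) = x0"
      using HP[OF u] cube_bd[OF t] by auto
  next
    fix t assume t: "t \<in> unit_cube n"
    show "join3 \<alpha> (\<lambda>t. \<beta> (t(0 := 1 - t 0))) \<beta>' t =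
      join3 (\<lambda>x. \<alpha> (snd (0::real, x))) (\<lambda>x. \<beta> ((snd (0::real, x))(0 := 1 - snd (0::real, x) 0))) (\<lambda>x. Hm (0, x)) t"
      by (simp add: H0 join3_def)
    show "join3 \<alpha> (\<lambda>t. \<beta> (t(0 := 1 - t 0))) \<beta> t =
      join3 (\<lambda>x. \<alpha> (snd (1::real, x))) (\<lambda>x. \<beta> ((snd (1::real, x))(0 := 1 - snd (1::real, x) 0))) (\<lambda>x. Hm (1, x)) t"
      by (simp add: H1 join3_def)
  qed
  have step2: "homotopic_with ?P (cube_top n) ?Y (join3 \<alpha> (\<lambda>t. \<beta> (t(0 := 1 - t 0))) \<beta>)
          (\<lambda>t. \<alpha> (t(0 := min 1 (3 * t 0))))"
  proof (rule J[where F = "\<lambda>p. \<alpha> (snd p)" and G = "\<lambda>p. \<beta> ((snd p)(0 := max (1 - snd p 0) (fst p)))"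
                and K = "\<lambda>p. \<beta> ((snd p)(0 := max (snd p 0) (fst p)))", OF n])
    show "continuous_map (top_of_set ({0..1::real}\<times>unit_cube n)) ?Y (\<lambda>p. \<alpha> (snd p))" by (rule lift_snd[OF ca])
    show "continuous_map (top_of_set ({0..1::real}\<times>unit_cube n)) ?Y (\<lambda>p. \<beta> ((snd p)(0 := max (1 - snd p 0) (fst p))))"
      by (rule lift_upd[OF cb n]) (auto intro!: continuous_intros dest: cube01[OF _ n])
    show "continuous_map (top_of_set ({0..1::real}\<times>unit_cube n)) ?Y (\<lambda>p. \<beta> ((snd p)(0 := max (snd p 0) (fst p))))"
      by (rule lift_upd[OF cb n]) (auto intro!: continuous_intros dest: cube01[OF _ n])
  next
    fix u t assume u: "u \<in> {0..1::real}" and t: "t \<in> unit_cube n"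
    have m1: "max 1 u = 1" using u by auto
    show "\<alpha> (snd (u, t(0 := 1))) = \<beta> ((snd (u, t(0 := 0)))(0 := max (1 - snd (u, t(0 := 0)) 0) (fst (u, t(0 := 0)))))"
      using Pa Pb bd_upd01[OF t n] m1 by simp
    show "\<beta> ((snd (u, t(0 := 1)))(0 := max (1 - snd (u, t(0 := 1)) 0) (fst (u, t(0 := 1))))) =
          \<beta> ((snd (u, t(0 := 0)))(0 := max (snd (u, t(0 := 0)) 0) (fst (u, t(0 := 0)))))"
      by simp
    show "t 0 = 0 \<or> (\<exists>i<n. i \<noteq> 0 \<and> (t i = 0 \<or> t i = 1)) \<Longrightarrow> \<alpha> (snd (u, t)) = x0"
      using Pa cube_bd[OF t] by auto
    have r: "0 \<le> max (1 - t 0) u \<and> max (1 - t 0) u \<le> 1" "0 \<le> max (t 0) u \<and> max (t 0) u \<le> 1"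
      using u cube01[OF t n] by auto
    show "(\<exists>i<n. i \<noteq> 0 \<and> (t i = 0 \<or> t i = 1)) \<Longrightarrow> \<beta> ((snd (u, t))(0 := max (1 - snd (u, t) 0) (fst (u, t)))) = x0"
      using Pb bd_upd_other[OF t] r by auto
    show "t 0 = 1 \<or> (\<exists>i<n. i \<noteq> 0 \<and> (t i = 0 \<or> t i = 1)) \<Longrightarrow> \<beta> ((snd (u, t))(0 := max (snd (u, t) 0) (fst (u, t)))) = x0"
    proof -
      assume "t 0 = 1 \<or> (\<exists>i<n. i \<noteq> 0 \<and> (t i = 0 \<or> t i = 1))"
      then consider "t 0 = 1" | "\<exists>i<n. i \<noteq> 0 \<and> (t i = 0 \<or> t i = 1)" by blast
      then show ?thesis
      proof cases
        case 1 then show ?thesis using Pb bd_upd01[OF t n, of 1] m1 by simp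
      next
        case 2 then show ?thesis using Pb bd_upd_other[OF t] r by auto
      qed
    qed
  next
    fix t assume t: "t \<in> unit_cube n"
    have t01: "0 \<le> t 0" "t 0 \<le> 1" using cube01[OF t n] by auto
    show "join3 \<alpha> (\<lambda>t. \<beta> (t(0 := 1 - t 0))) \<beta> t =
      join3 (\<lambda>x. \<alpha> (snd (0::real, x))) (\<lambda>x. \<beta> ((snd (0::real, x))(0 := max (1 - snd (0::real, x) 0) (fst (0::real, x)))))
        (\<lambda>x. \<beta> ((snd (0::real, x))(0 := max (snd (0::real, x) 0) (fst (0::real, x))))) t"
      using t01 by (simp add: join3_def)
    have x1: "\<beta> (t(0 := 1)) = x0" "\<alpha> (t(0 := 1)) = x0" using Pa Pb bd_upd01[OF t n] by auto
    show "\<alpha> (t(0 := min 1 (3 * t 0))) =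
      join3 (\<lambda>x. \<alpha> (snd (1::real, x))) (\<lambda>x. \<beta> ((snd (1::real, x))(0 := max (1 - snd (1::real, x) 0) (fst (1::real, x)))))
        (\<lambda>x. \<beta> ((snd (1::real, x))(0 := max (snd (1::real, x) 0) (fst (1::real, x))))) t"
    proof (cases "t 0 \<le> 1/3")
      case True
      then have "min 1 (3 * t 0) = 3 * t 0" by simp
      then show ?thesis using True by (simp add: join3_def)
    next
      case False
      have m: "min 1 (3 * t 0) = 1" "max (1 - (3 * t 0 - 1)) (1::real) = 1" "max (3 * t 0 - 2) (1::real) = 1"
        using t01 False by auto
      show ?thesis using False x1 by (simp add: join3_def m)
    qed
  qed
  have step3: "homotopic_with ?P (cube_top n) ?Y (\<lambda>t. \<alpha> (t(0 := min 1 (3 * t 0)))) \<alpha>"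
  proof (rule L1[OF n ca Pa, where \<phi> = "\<lambda>s. min 1 (3 * s)" and \<psi> = "\<lambda>s. s"])
    show "continuous_on {0..1} (\<lambda>s::real. min 1 (3 * s))" by (intro continuous_intros)
    show "continuous_on {0..1} (\<lambda>s::real. s)" by (intro continuous_intros)
  qed auto
  show ?thesis using homotopic_with_trans[OF homotopic_with_trans[OF step1 step2] step3] .
qed



lemma chainB:
  assumes ms: "Metric_space M d" and n: "0 < n"
    and b: "\<beta> \<in> Omega n M d x0" and c: "\<gamma> \<in> Omega n M d x0"
  shows "homotopic_with (\<lambda>h. \<forall>t\<in>cube_boundary n. h t = x0) (cube_top n) (Metric_space.mtopology M d)
           (join3 \<beta> (\<lambda>t. \<beta> (t(0 := 1 - t 0))) \<gamma>) \<gamma>"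
proof -
  let ?Y = "Metric_space.mtopology M d"
  let ?P = "\<lambda>h. \<forall>t\<in>cube_boundary n. h t = x0"
  have cc: "continuous_map (cube_top n) ?Y \<gamma>" and Pc: "\<forall>t\<in>cube_boundary n. \<gamma> t = x0"
    using c by (auto simp: Omega_def)
  have cb: "continuous_map (cube_top n) ?Y \<beta>" and Pb: "\<forall>t\<in>cube_boundary n. \<beta> t = x0"
    using b by (auto simp: Omega_def)
  have cube_bd: "\<And>t. t \<in> unit_cube n \<Longrightarrow> t 0 = 0 \<or> t 0 = 1 \<or> (\<exists>i<n. i \<noteq> 0 \<and> (t i = 0 \<or> t i = 1)) \<Longrightarrow> t \<in> cube_boundary n"
    using bd_intro n by blast
  have step1: "homotopic_with ?P (cube_top n) ?Y (join3 \<beta> (\<lambda>t. \<beta> (t(0 := 1 - t 0))) \<gamma>)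
          (\<lambda>t. \<gamma> (t(0 := max 0 (3 * t 0 - 2))))"
  proof (rule J[where F = "\<lambda>p. \<beta> ((snd p)(0 := min (snd p 0) (1 - fst p)))"
                and G = "\<lambda>p. \<beta> ((snd p)(0 := min (1 - snd p 0) (1 - fst p)))"
                and K = "\<lambda>p. \<gamma> (snd p)", OF n])
    show "continuous_map (top_of_set ({0..1::real}\<times>unit_cube n)) ?Y (\<lambda>p. \<gamma> (snd p))" by (rule lift_snd[OF cc])
    show "continuous_map (top_of_set ({0..1::real}\<times>unit_cube n)) ?Y (\<lambda>p. \<beta> ((snd p)(0 := min (snd p 0) (1 - fst p))))"
      by (rule lift_upd[OF cb n]) (auto intro!: continuous_intros dest: cube01[OF _ n])
    show "continuous_map (top_of_set ({0..1::real}\<times>unit_cube n)) ?Y (\<lambda>p. \<beta> ((snd p)(0 := min (1 - snd p 0) (1 - fst p))))"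
      by (rule lift_upd[OF cb n]) (auto intro!: continuous_intros dest: cube01[OF _ n])
  next
    fix u t assume u: "u \<in> {0..1::real}" and t: "t \<in> unit_cube n"
    have m0: "min 0 (1 - u) = 0" using u by auto
    show "\<beta> ((snd (u, t(0 := 1)))(0 := min (snd (u, t(0 := 1)) 0) (1 - fst (u, t(0 := 1))))) =
          \<beta> ((snd (u, t(0 := 0)))(0 := min (1 - snd (u, t(0 := 0)) 0) (1 - fst (u, t(0 := 0)))))"
      by simp
    show "\<beta> ((snd (u, t(0 := 1)))(0 := min (1 - snd (u, t(0 := 1)) 0) (1 - fst (u, t(0 := 1))))) = \<gamma> (snd (u, t(0 := 0)))"
      using Pb Pc bd_upd01[OF t n] m0 by simp
    have r: "0 \<le> min (t 0) (1 - u) \<and> min (t 0) (1 - u) \<le> 1" "0 \<le> min (1 - t 0) (1 - u) \<and> min (1 - t 0) (1 - u) \<le> 1"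
      using u cube01[OF t n] by auto
    show "t 0 = 0 \<or> (\<exists>i<n. i \<noteq> 0 \<and> (t i = 0 \<or> t i = 1)) \<Longrightarrow> \<beta> ((snd (u, t))(0 := min (snd (u, t) 0) (1 - fst (u, t)))) = x0"
    proof -
      assume "t 0 = 0 \<or> (\<exists>i<n. i \<noteq> 0 \<and> (t i = 0 \<or> t i = 1))"
      then consider "t 0 = 0" | "\<exists>i<n. i \<noteq> 0 \<and> (t i = 0 \<or> t i = 1)" by blast
      then show ?thesis
      proof cases
        case 1 then show ?thesis using Pb bd_upd01[OF t n, of 0] m0 by simp
      next
        case 2 then show ?thesis using Pb bd_upd_other[OF t] r by auto
      qed
    qed
    show "(\<exists>i<n. i \<noteq> 0 \<and> (t i = 0 \<or> t i = 1)) \<Longrightarrow> \<beta> ((snd (u, t))(0 := min (1 - snd (u, t) 0) (1 - fst (u, t)))) = x0"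
      using Pb bd_upd_other[OF t] r by auto
    show "t 0 = 1 \<or> (\<exists>i<n. i \<noteq> 0 \<and> (t i = 0 \<or> t i = 1)) \<Longrightarrow> \<gamma> (snd (u, t)) = x0"
      using Pc cube_bd[OF t] by auto
  next
    fix t assume t: "t \<in> unit_cube n"
    have t01: "0 \<le> t 0" "t 0 \<le> 1" using cube01[OF t n] by auto
    have x1: "\<beta> (t(0 := 0)) = x0" "\<gamma> (t(0 := 0)) = x0" using Pc Pb bd_upd01[OF t n] by auto
    show "join3 \<beta> (\<lambda>t. \<beta> (t(0 := 1 - t 0))) \<gamma> t =
      join3 (\<lambda>x. \<beta> ((snd (0::real, x))(0 := min (snd (0::real, x) 0) (1 - fst (0::real, x)))))
        (\<lambda>x. \<beta> ((snd (0::real, x))(0 := min (1 - snd (0::real, x) 0) (1 - fst (0::real, x)))))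
        (\<lambda>x. \<gamma> (snd (0::real, x))) t"
    proof (cases "t 0 \<le> 1/3")
      case True
      then have "min (3 * t 0) 1 = 3 * t 0" by simp
      then show ?thesis using True by (simp add: join3_def)
    next
      case False
      have "min (1 - (3 * t 0 - 1)) 1 = 1 - (3 * t 0 - 1)" using False by simp
      then show ?thesis using False by (simp add: join3_def)
    qed
    show "\<gamma> (t(0 := max 0 (3 * t 0 - 2))) =
      join3 (\<lambda>x. \<beta> ((snd (1::real, x))(0 := min (snd (1::real, x) 0) (1 - fst (1::real, x)))))
        (\<lambda>x. \<beta> ((snd (1::real, x))(0 := min (1 - snd (1::real, x) 0) (1 - fst (1::real, x)))))
        (\<lambda>x. \<gamma> (snd (1::real, x))) t"
    proof (cases "t 0 \<le> 2/3")
      case True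
      have m: "max 0 (3 * t 0 - 2) = 0" "min (3 * t 0) (0::real) = 0" "min (1 - (3 * t 0 - 1)) (0::real) = 0"
        using True t01 by auto
      show ?thesis using True x1 by (simp add: join3_def m)
    next
      case False
      have m: "max 0 (3 * t 0 - 2) = 3 * t 0 - 2" using False by auto
      show ?thesis using False by (simp add: join3_def m)
    qed
  qed
  have step2: "homotopic_with ?P (cube_top n) ?Y (\<lambda>t. \<gamma> (t(0 := max 0 (3 * t 0 - 2)))) \<gamma>"
  proof (rule L1[OF n cc Pc, where \<phi> = "\<lambda>s. max 0 (3 * s - 2)" and \<psi> = "\<lambda>s. s"])
    show "continuous_on {0..1} (\<lambda>s::real. max 0 (3 * s - 2))" by (intro continuous_intros)
    show "continuous_on {0..1} (\<lambda>s::real. s)" by (intro continuous_intros)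
  qed auto
  show ?thesis using homotopic_with_trans[OF step1 step2] .
qed



lemma class_facts:
  assumes "a \<in> homotopy_group_set n M d x0"
  shows "\<exists>\<alpha>. \<alpha> \<in> a"
    and "\<alpha> \<in> a \<Longrightarrow> \<alpha> \<in> Omega n M d x0"
    and "\<alpha> \<in> a \<Longrightarrow> \<beta> \<in> a \<Longrightarrow> homotopic_with (\<lambda>h. \<forall>t\<in>cube_boundary n. h t = x0) (cube_top n) (Metric_space.mtopology M d) \<alpha> \<beta>"
    and "\<alpha> \<in> a \<Longrightarrow> homotopic_with (\<lambda>h. \<forall>t\<in>cube_boundary n. h t = x0) (cube_top n) (Metric_space.mtopology M d) \<alpha> \<beta> \<Longrightarrow> \<beta> \<in> a"
proof -
  obtain z where z: "z \<in> Omega n M d x0" "a = rel_homotopic n M d x0 `` {z}"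
    using assms unfolding homotopy_group_set_def by (auto elim: quotientE)
  have zz: "(z,z) \<in> rel_homotopic n M d x0"
    using z(1) unfolding R_iff by (simp add: Omega_def)
  then show "\<exists>\<alpha>. \<alpha> \<in> a" using z by blast
  show "\<alpha> \<in> a \<Longrightarrow> \<alpha> \<in> Omega n M d x0" using z by (auto simp: rel_homotopic_def)
  show "\<alpha> \<in> a \<Longrightarrow> \<beta> \<in> a \<Longrightarrow> homotopic_with (\<lambda>h. \<forall>t\<in>cube_boundary n. h t = x0) (cube_top n) (Metric_space.mtopology M d) \<alpha> \<beta>"
  proof -
    assume "\<alpha> \<in> a" "\<beta> \<in> a"
    then have "(z,\<alpha>) \<in> rel_homotopic n M d x0" "(z,\<beta>) \<in> rel_homotopic n M d x0" using z by auto
    then show ?thesis unfolding R_iff by (meson homotopic_with_sym homotopic_with_trans)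
  qed
  show "\<alpha> \<in> a \<Longrightarrow> homotopic_with (\<lambda>h. \<forall>t\<in>cube_boundary n. h t = x0) (cube_top n) (Metric_space.mtopology M d) \<alpha> \<beta> \<Longrightarrow> \<beta> \<in> a"
  proof -
    assume "\<alpha> \<in> a" "homotopic_with (\<lambda>h. \<forall>t\<in>cube_boundary n. h t = x0) (cube_top n) (Metric_space.mtopology M d) \<alpha> \<beta>"
    moreover have "(z,\<alpha>) \<in> rel_homotopic n M d x0" using z \<open>\<alpha> \<in> a\<close> by auto
    ultimately have "(z,\<beta>) \<in> rel_homotopic n M d x0" unfolding R_iff by (meson homotopic_with_trans)
    then show "\<beta> \<in> a" using z by auto
  qed
qed

lemma key:
  assumes ms: "Metric_space M d" and n: "0 < n"
    and A: "a \<in> homotopy_group_set n M d x0" and B: "b \<in> homotopy_group_set n M d x0" and C: "c \<in> homotopy_group_set n M d x0"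
    and a: "\<alpha> \<in> a" and b: "\<beta> \<in> b" and b': "\<beta>' \<in> b" and c: "\<gamma> \<in> c"
  shows "rho n d a c \<le> unif_dist n d \<alpha> \<beta> + unif_dist n d \<beta>' \<gamma>"
proof -
  have oa: "\<alpha> \<in> Omega n M d x0" and ob: "\<beta> \<in> Omega n M d x0" and ob': "\<beta>' \<in> Omega n M d x0"
    and oc: "\<gamma> \<in> Omega n M d x0"
    using class_facts(2)[OF A a] class_facts(2)[OF B b] class_facts(2)[OF B b'] class_facts(2)[OF C c] by auto
  define \<alpha>' where "\<alpha>' = join3 \<alpha> (\<lambda>t. \<beta> (t(0 := 1 - t 0))) \<beta>'"
  define \<gamma>' where "\<gamma>' = join3 \<beta> (\<lambda>t. \<beta> (t(0 := 1 - t 0))) \<gamma>"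
  have H: "homotopic_with (\<lambda>h. \<forall>t\<in>cube_boundary n. h t = x0) (cube_top n) (Metric_space.mtopology M d) \<beta>' \<beta>"
    by (rule class_facts(3)[OF B b' b])
  have hA: "homotopic_with (\<lambda>h. \<forall>t\<in>cube_boundary n. h t = x0) (cube_top n) (Metric_space.mtopology M d) \<alpha>' \<alpha>"
    unfolding \<alpha>'_def by (rule chainA[OF ms n oa ob ob' H])
  have hC: "homotopic_with (\<lambda>h. \<forall>t\<in>cube_boundary n. h t = x0) (cube_top n) (Metric_space.mtopology M d) \<gamma>' \<gamma>"
    unfolding \<gamma>'_def by (rule chainB[OF ms n ob oc])
  have a': "\<alpha>' \<in> a" using class_facts(4)[OF A a] hA by (simp add: homotopic_with_sym)
  have c': "\<gamma>' \<in> c" using class_facts(4)[OF C c] hC by (simp add: homotopic_with_sym)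
  have oa': "\<alpha>' \<in> Omega n M d x0" and oc': "\<gamma>' \<in> Omega n M d x0"
    using class_facts(2)[OF A a'] class_facts(2)[OF C c'] by auto
  have n1: "0 \<le> unif_dist n d \<alpha> \<beta>" by (rule unif_nonneg[OF ms oa ob])
  have n2: "0 \<le> unif_dist n d \<beta>' \<gamma>" by (rule unif_nonneg[OF ms ob' oc])
  have "unif_dist n d \<alpha>' \<gamma>' \<le> unif_dist n d \<alpha> \<beta> + unif_dist n d \<beta>' \<gamma>"
  proof (rule unif_least)
    fix t assume t: "t \<in> unit_cube n"
    have t01: "0 \<le> t 0" "t 0 \<le> 1" using cube01[OF t n] by auto
    show "d (\<alpha>' t) (\<gamma>' t) \<le> unif_dist n d \<alpha> \<beta> + unif_dist n d \<beta>' \<gamma>"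
    proof (cases "t 0 \<le> 1/3")
      case True
      have x: "t(0 := 3 * t 0) \<in> unit_cube n" using cube_upd[OF t n] True t01 by simp
      have "d (\<alpha>' t) (\<gamma>' t) = d (\<alpha> (t(0 := 3 * t 0))) (\<beta> (t(0 := 3 * t 0)))"
        using True by (simp add: \<alpha>'_def \<gamma>'_def join3_def)
      also have "\<dots> \<le> unif_dist n d \<alpha> \<beta>" by (rule unif_upper[OF ms oa ob x])
      finally show ?thesis using n2 by linarith
    next
      case False
      show ?thesis
      proof (cases "t 0 \<le> 2/3")
        case True
        have x: "(t(0 := 3 * t 0 - 1))(0 := 1 - (3 * t 0 - 1)) \<in> unit_cube n"
          using cube_upd[OF t n, of "1 - (3 * t 0 - 1)"] True False by simp
        have "d (\<alpha>' t) (\<gamma>' t) = d (\<beta> ((t(0 := 3 * t 0 - 1))(0 := 1 - (3 * t 0 - 1)))) (\<beta> ((t(0 := 3 * t 0 - 1))(0 := 1 - (3 * t 0 - 1))))"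
          using True False by (simp add: \<alpha>'_def \<gamma>'_def join3_def)
        also have "\<dots> = 0" using Omega_into[OF ms ob x] Metric_space.zero[OF ms] by simp
        finally show ?thesis using n1 n2 by linarith
      next
        case False2: False
        have x: "t(0 := 3 * t 0 - 2) \<in> unit_cube n" using cube_upd[OF t n, of "3 * t 0 - 2"] False2 t01 by simp
        have "d (\<alpha>' t) (\<gamma>' t) = d (\<beta>' (t(0 := 3 * t 0 - 2))) (\<gamma> (t(0 := 3 * t 0 - 2)))"
          using False False2 by (simp add: \<alpha>'_def \<gamma>'_def join3_def)
        also have "\<dots> \<le> unif_dist n d \<beta>' \<gamma>" by (rule unif_upper[OF ms ob' oc x])
        finally show ?thesis using n1 by linarith
      qed
    qed
  qed
  moreover have "rho n d a c \<le> unif_dist n d \<alpha>' \<gamma>'"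
    unfolding rho_def
  proof (rule cInf_lower)
    show "unif_dist n d \<alpha>' \<gamma>' \<in> {unif_dist n d \<alpha> \<beta> |\<alpha> \<beta>. \<alpha> \<in> a \<and> \<beta> \<in> c}" using a' c' by blast
    show "bdd_below {unif_dist n d \<alpha> \<beta> |\<alpha> \<beta>. \<alpha> \<in> a \<and> \<beta> \<in> c}"
      unfolding bdd_below_def
      using unif_nonneg[OF ms] class_facts(2)[OF A] class_facts(2)[OF C] by blast
  qed
  ultimately show ?thesis by linarith
qed



theorem theorem4p5:
  fixes M :: "'a set" and d :: "'a \<Rightarrow> 'a \<Rightarrow> real" and x0 :: 'a and n :: nat
  assumes "Metric_space M d" and "x0 \<in> M" and "n \<ge> 1"
  shows "pseudometric_on (homotopy_group_set n M d x0) (rho n d)"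
proof -
  note ms = assms(1)
  have n: "0 < n" using assms(3) by simp
  let ?HG = "homotopy_group_set n M d x0"
  let ?S = "\<lambda>a b. {unif_dist n d \<alpha> \<beta> |\<alpha> \<beta>. \<alpha> \<in> a \<and> \<beta> \<in> b}"
  have ne: "?S a b \<noteq> {}" if "a \<in> ?HG" "b \<in> ?HG" for a b
    using class_facts(1)[OF that(1)] class_facts(1)[OF that(2)] by blast
  have lb: "0 \<le> x" if "a \<in> ?HG" "b \<in> ?HG" "x \<in> ?S a b" for a b x
    using that unif_nonneg[OF ms] class_facts(2)[OF that(1)] class_facts(2)[OF that(2)] by blast
  have r_eq: "rho n d a b = Inf (?S a b)" for a b by (simp add: rho_def)
  show ?thesis
    unfolding pseudometric_on_def
  proof (intro conjI ballI)
    fix a b assume a: "a \<in> ?HG" and b: "b \<in> ?HG"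
    show "0 \<le> rho n d a b" unfolding r_eq
      by (rule cInf_greatest[OF ne[OF a b]]) (rule lb[OF a b])
    have "?S a b = ?S b a"
    proof (intro set_eqI iffI)
      fix x assume "x \<in> ?S a b"
      then obtain \<alpha> \<beta> where "x = unif_dist n d \<alpha> \<beta>" "\<alpha> \<in> a" "\<beta> \<in> b" by blast
      then show "x \<in> ?S b a" using unif_sym[OF ms class_facts(2)[OF a] class_facts(2)[OF b]] by blast
    next
      fix x assume "x \<in> ?S b a"
      then obtain \<alpha> \<beta> where "x = unif_dist n d \<alpha> \<beta>" "\<alpha> \<in> b" "\<beta> \<in> a" by blast
      then show "x \<in> ?S a b" using unif_sym[OF ms class_facts(2)[OF b] class_facts(2)[OF a]] by blast
    qed
    then show "rho n d a b = rho n d b a" unfolding r_eq by simp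
  next
    fix a assume a: "a \<in> ?HG"
    obtain \<alpha> where al: "\<alpha> \<in> a" using class_facts(1)[OF a] by blast
    have z: "0 \<in> ?S a a"
      using unif_self[OF ms class_facts(2)[OF a al]] al by force
    show "rho n d a a = 0" unfolding r_eq
      by (rule cInf_eq_minimum[OF z]) (rule lb[OF a a])
  next
    fix a b c assume a: "a \<in> ?HG" and b: "b \<in> ?HG" and c: "c \<in> ?HG"
    have s1: "rho n d a c - unif_dist n d \<beta>' \<gamma> \<le> rho n d a b" if "\<beta>' \<in> b" "\<gamma> \<in> c" for \<beta>' \<gamma>
      unfolding r_eq[of a b]
    proof (rule cInf_greatest[OF ne[OF a b]])
      fix x assume "x \<in> ?S a b"
      then obtain \<alpha> \<beta> where "x = unif_dist n d \<alpha> \<beta>" "\<alpha> \<in> a" "\<beta> \<in> b" by blast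
      then show "rho n d a c - unif_dist n d \<beta>' \<gamma> \<le> x"
        using key[OF ms n a b c _ _ that] by force
    qed
    have "rho n d a c - rho n d a b \<le> rho n d b c"
      unfolding r_eq[of b c]
    proof (rule cInf_greatest[OF ne[OF b c]])
      fix x assume "x \<in> ?S b c"
      then obtain \<beta>' \<gamma> where "x = unif_dist n d \<beta>' \<gamma>" "\<beta>' \<in> b" "\<gamma> \<in> c" by blast
      then show "rho n d a c - rho n d a b \<le> x" using s1 by force
    qed
    then show "rho n d a c \<le> rho n d a b + rho n d b c" by linarith
  qed
qed

end
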